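(* Let $a>0$ and $T>0$, let $c=\ln 2$, and let $W_0$ denote the principal branch of the Lambert W function. For $\lambda>0$ define $$P(\lambda)=\frac{2}{\lambda c^2}\,W_0\!\left(\frac{\lambda c^2}{2a}\,2^{T}\right)-\frac1a.$$ Then $P(\lambda)$ is strictly decreasing in $\lambda$ on $(0,\infty)$.
   Context: The Lambert W function is the inverse relation of $w\mapsto we^w$; its principal branch $W_0$ is the real-valued branch on $[-1/e,\infty)$ with $W_0\ge -1$, so for $z\ge 0$, $W_0(z)$ is the unique $w\ge 0$ with $we^w=z$. *)

theory Defs
  imports Complex_Main
begin

text \<open>Principal branch of the Lambert W function, on its real domain [-1/e, inf):
  the unique w >= -1 with w * exp w = z. Outside the domain the value is unspecified.\<close>
definition lambertW0 :: "real \<Rightarrow> real" where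
  "lambertW0 z = (THE w. w \<ge> -1 \<and> w * exp w = z)"

end

theory Submission
  imports Defs
begin

lemma mono_we: "0 \<le> u \<Longrightarrow> u < v \<Longrightarrow> u * exp u < v * exp (v::real)"
proof -
  assume h: "0 \<le> u" "u < v"
  have "u * exp u \<le> u * exp v" using h by (simp add: mult_left_mono)
  also have "\<dots> < v * exp v" using h by simp
  finally show ?thesis .
qed

lemma W_char:
  fixes z :: real assumes z: "z > 0"
  shows "lambertW0 z > 0 \<and> lambertW0 z * exp (lambertW0 z) = z"
proof -
  have "\<exists>x. 0 \<le> x \<and> x \<le> z \<and> x * exp x = z"
  proof (rule IVT')
    show "(\<lambda>x. x * exp x) 0 \<le> z" using z by simp
    have "z \<le> z * exp z" using z by simp
    then show "z \<le> (\<lambda>x. x * exp x) z" by simp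
    show "0 \<le> z" using z by simp
    show "continuous_on {0..z} (\<lambda>x::real. x * exp x)" by (intro continuous_intros)
  qed
  then obtain w where w: "0 \<le> w" "w * exp w = z" by blast
  have wpos: "w > 0" using w z by (cases "w = 0") auto
  have pos: "v > 0" if "v \<ge> -1" "v * exp v = z" for v :: real
  proof (rule ccontr)
    assume "\<not> v > 0"
    then have "v * exp v \<le> 0" by (simp add: mult_nonpos_nonneg)
    with that z show False by simp
  qed
  have uniq: "v = w" if "v \<ge> -1" "v * exp v = z" for v
  proof -
    have "v > 0" using pos that by blast
    then show ?thesis
    proof (cases v w rule: linorder_cases)
      case less with mono_we[of v w] \<open>v > 0\<close> w that show ?thesis by simp
    next
      case greater with mono_we[of w v] w that show ?thesis by simp
    qed
  qed
  have "lambertW0 z = w" unfolding lambertW0_def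
    by (rule the_equality) (use w uniq in auto)
  then show ?thesis using w wpos by simp
qed

lemma W_mono: "0 < z1 \<Longrightarrow> z1 < z2 \<Longrightarrow> lambertW0 z1 < lambertW0 z2"
proof (rule ccontr)
  assume h: "0 < z1" "z1 < z2" "\<not> lambertW0 z1 < lambertW0 z2"
  have a: "lambertW0 z1 > 0 \<and> lambertW0 z1 * exp (lambertW0 z1) = z1" using W_char h by auto
  have b: "lambertW0 z2 > 0 \<and> lambertW0 z2 * exp (lambertW0 z2) = z2" using W_char h by auto
  show False
  proof (cases "lambertW0 z1 = lambertW0 z2")
    case True then show ?thesis using a b h by auto
  next
    case False
    then have "lambertW0 z2 < lambertW0 z1" using h by auto
    from mono_we[OF _ this] a b h show ?thesis by auto
  qed
qed

lemma W_ratio: "z > 0 \<Longrightarrow> lambertW0 z / z = 1 / exp (lambertW0 z)"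
proof -
  assume z: "z > 0"
  have e: "lambertW0 z * exp (lambertW0 z) = z" using W_char[OF z] by simp
  have "lambertW0 z \<noteq> 0" using W_char[OF z] by simp
  then show ?thesis using z by (subst (2) e[symmetric]) simp
qed

theorem lemma1:
  fixes a T :: real
  assumes "a > 0" and "T > 0"
  defines "P \<equiv> (\<lambda>l::real. 2 / (l * (ln 2)\<^sup>2) * lambertW0 (l * (ln 2)\<^sup>2 / (2 * a) * 2 powr T) - 1 / a)"
  shows "strict_antimono_on {0<..} P"
proof (rule monotone_onI)
  fix x y :: real assume xy: "x \<in> {0<..}" "y \<in> {0<..}" "x < y"
  define k where "k = (ln 2)\<^sup>2 / (2 * a) * 2 powr T"
  have k: "k > 0" unfolding k_def using assms by simp
  have eq: "P l = 2 * k / (ln 2)\<^sup>2 * (1 / exp (lambertW0 (l * k))) - 1 / a" if "l > 0" for l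
  proof -
    have "P l = 2 * k / (ln 2)\<^sup>2 * (lambertW0 (l * k) / (l * k)) - 1 / a"
      unfolding P_def k_def using that assms by (simp add: field_simps)
    then show ?thesis using W_ratio[of "l*k"] that k by simp
  qed
  have "lambertW0 (x * k) < lambertW0 (y * k)" using W_mono xy k by simp
  then have "1 / exp (lambertW0 (y * k)) < 1 / exp (lambertW0 (x * k))"
    by (intro divide_strict_left_mono) auto
  moreover have "2 * k / (ln 2)\<^sup>2 > 0" using k by simp
  ultimately have "2 * k / (ln 2)\<^sup>2 * (1 / exp (lambertW0 (y * k))) < 2 * k / (ln 2)\<^sup>2 * (1 / exp (lambertW0 (x * k)))"
    by (rule mult_strict_left_mono)
  then show "P y < P x" proof -
    have "x > 0" "y > 0" using xy by auto
    then show ?thesis using eq[of x] eq[of y] \<open>2 * k / (ln 2)\<^sup>2 * (1 / exp (lambertW0 (y * k))) < _\<close> by linarith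
  qed
qed

end
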